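(* Let $\mathbf{X}\sim\mathcal{MSP}(\boldsymbol{\mu},\mathbf{K})$ be a $p$-variate $L^2$-continuous process on a compact interval $\mathcal{T}$, $P=\{1,\dots,p\}$, and let $(\pi_i,\boldsymbol{\psi}_i)$, $i=1,\dots,M$, be the $M$ largest eigenpairs of its covariance operator with $\pi_M>0$; write $\psi_{i,k}=\boldsymbol{\psi}_i'\mathbf{e}_k$. For $S\subseteq P$ let $\hat{\mathbf{X}}^S=(\hat X^S_1,\dots,\hat X^S_p)'$ with $\hat X^S_j=X_j$ if $j\in S$ and $\hat X^S_j=\mu_j$ if $j\notin S$, and let $\Delta_k\mathrm{fMMD}^2(\hat{\mathbf{X}}^S,\boldsymbol{\mu};\mathbf{K},M)=\mathrm{fMMD}^2(\hat{\mathbf{X}}^{S\cup\{k\}},\boldsymbol{\mu};\mathbf{K},M)-\mathrm{fMMD}^2(\hat{\mathbf{X}}^S,\boldsymbol{\mu};\mathbf{K},M)$. Then $$\theta_k(\mathbf{X},\boldsymbol{\mu};\mathbf{K},M):=\sum_{S\subseteq P\setminus\{k\}}\frac{|S|!(p-|S|-1)!}{p!}\Delta_k\mathrm{fMMD}^2(\hat{\mathbf{X}}^S,\boldsymbol{\mu};\mathbf{K},M)=\sum_{i=1}^M\frac{1}{\pi_i}\langle X_k-\mu_k,\psi_{i,k}\rangle\langle\mathbf{X}-\boldsymbol{\mu},\boldsymbol{\psi}_i\rangle.$$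
   Context: $\mathcal{H}=L^2(\mathcal{T})^p$ with $\langle\mathbf{x},\mathbf{y}\rangle=\sum_j\int_{\mathcal{T}}x_jy_j$; for scalar functions $\langle f,g\rangle=\int_{\mathcal{T}}fg$. $\mathbf{X}\sim\mathcal{MSP}(\boldsymbol{\mu},\mathbf{K})$: mean $\boldsymbol{\mu}(t)=E\mathbf{X}(t)$, covariance kernel $\mathbf{K}(s,t)=[\mathrm{Cov}(X_i(s),X_j(t))]$, covariance operator $\mathcal{C}\mathbf{x}(s)=\int\mathbf{K}(s,t)\mathbf{x}(t)dt$ with orthonormal eigenfunctions $\boldsymbol{\psi}_i$ and nonincreasing eigenvalues $\pi_i$. $\mathrm{fMMD}^2(\mathbf{Y},\boldsymbol{\mu};\mathbf{K},M)=\sum_{i=1}^M\pi_i^{-1}\langle\mathbf{Y}-\boldsymbol{\mu},\boldsymbol{\psi}_i\rangle^2$. $\mathbf{e}_k$ is the $k$th canonical basis vector of $\mathbb{R}^p$. *)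

theory Defs
  imports "HOL-Analysis.Analysis" "HOL-Probability.Probability"
begin

text \<open>Multivariate functions x in H = L2(T)^p are represented as
  x :: nat \<Rightarrow> real \<Rightarrow> real, with x j t the j-th component at time t, j \<in> {1..p}.\<close>

definition sinner :: "real set \<Rightarrow> (real \<Rightarrow> real) \<Rightarrow> (real \<Rightarrow> real) \<Rightarrow> real" where
  "sinner T f g = integral T (\<lambda>t. f t * g t)"

definition Hinner :: "real set \<Rightarrow> nat \<Rightarrow> (nat \<Rightarrow> real \<Rightarrow> real) \<Rightarrow> (nat \<Rightarrow> real \<Rightarrow> real) \<Rightarrow> real" where
  "Hinner T p x y = (\<Sum>j=1..p. sinner T (x j) (y j))"

definition L2fun :: "real set \<Rightarrow> (real \<Rightarrow> real) \<Rightarrow> bool" where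
  "L2fun T f \<longleftrightarrow> f measurable_on T \<and> (\<lambda>t. (f t)\<^sup>2) integrable_on T"

definition inH :: "real set \<Rightarrow> nat \<Rightarrow> (nat \<Rightarrow> real \<Rightarrow> real) \<Rightarrow> bool" where
  "inH T p x \<longleftrightarrow> (\<forall>j\<in>{1..p}. L2fun T (x j))"

text \<open>Covariance operator with kernel K (K j l s t = Cov(X_j(s), X_l(t))).\<close>
definition cov_op :: "real set \<Rightarrow> nat \<Rightarrow> (nat \<Rightarrow> nat \<Rightarrow> real \<Rightarrow> real \<Rightarrow> real)
    \<Rightarrow> (nat \<Rightarrow> real \<Rightarrow> real) \<Rightarrow> nat \<Rightarrow> real \<Rightarrow> real" where
  "cov_op T p K x j s = (\<Sum>l=1..p. integral T (\<lambda>t. K j l s t * x l t))"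

definition is_eigenpair :: "real set \<Rightarrow> nat \<Rightarrow> (nat \<Rightarrow> nat \<Rightarrow> real \<Rightarrow> real \<Rightarrow> real)
    \<Rightarrow> real \<Rightarrow> (nat \<Rightarrow> real \<Rightarrow> real) \<Rightarrow> bool" where
  "is_eigenpair T p K lam phi \<longleftrightarrow> inH T p phi \<and> Hinner T p phi phi > 0 \<and>
     (\<forall>j\<in>{1..p}. \<forall>s\<in>T. cov_op T p K phi j s = lam * phi j s)"

definition top_eigenpairs :: "real set \<Rightarrow> nat \<Rightarrow> (nat \<Rightarrow> nat \<Rightarrow> real \<Rightarrow> real \<Rightarrow> real)
    \<Rightarrow> nat \<Rightarrow> (nat \<Rightarrow> real) \<Rightarrow> (nat \<Rightarrow> nat \<Rightarrow> real \<Rightarrow> real) \<Rightarrow> bool" where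
  "top_eigenpairs T p K M pe psi \<longleftrightarrow>
     (\<forall>i\<in>{1..M}. is_eigenpair T p K (pe i) (psi i)) \<and>
     (\<forall>i\<in>{1..M}. \<forall>i'\<in>{1..M}. Hinner T p (psi i) (psi i') = (if i = i' then 1 else 0)) \<and>
     (\<forall>i\<in>{1..M}. \<forall>i'\<in>{1..M}. i \<le> i' \<longrightarrow> pe i' \<le> pe i) \<and>
     (\<forall>lam phi. is_eigenpair T p K lam phi \<and> (\<forall>i\<in>{1..M}. Hinner T p phi (psi i) = 0)
        \<longrightarrow> lam \<le> pe M)"

definition fMMD2 :: "real set \<Rightarrow> nat \<Rightarrow> (nat \<Rightarrow> real \<Rightarrow> real) \<Rightarrow> (nat \<Rightarrow> real \<Rightarrow> real)
    \<Rightarrow> (nat \<Rightarrow> real) \<Rightarrow> (nat \<Rightarrow> nat \<Rightarrow> real \<Rightarrow> real) \<Rightarrow> nat \<Rightarrow> real" where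
  "fMMD2 T p Y mu pe psi M =
     (\<Sum>i=1..M. (1 / pe i) * (Hinner T p (\<lambda>j t. Y j t - mu j t) (psi i))\<^sup>2)"

definition Xhat :: "nat set \<Rightarrow> (nat \<Rightarrow> real \<Rightarrow> real) \<Rightarrow> (nat \<Rightarrow> real \<Rightarrow> real) \<Rightarrow> nat \<Rightarrow> real \<Rightarrow> real" where
  "Xhat S x mu = (\<lambda>j t. if j \<in> S then x j t else mu j t)"

definition shapley_fMMD :: "real set \<Rightarrow> nat \<Rightarrow> (nat \<Rightarrow> real \<Rightarrow> real) \<Rightarrow> (nat \<Rightarrow> real \<Rightarrow> real)
    \<Rightarrow> (nat \<Rightarrow> real) \<Rightarrow> (nat \<Rightarrow> nat \<Rightarrow> real \<Rightarrow> real) \<Rightarrow> nat \<Rightarrow> nat \<Rightarrow> real" where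
  "shapley_fMMD T p x mu pe psi M k =
     (\<Sum>S\<in>Pow ({1..p} - {k}).
        (fact (card S) * fact (p - card S - 1) / fact p) *
        (fMMD2 T p (Xhat (insert k S) x mu) mu pe psi M - fMMD2 T p (Xhat S x mu) mu pe psi M))"

end

theory Submission
  imports Defs
begin

definition shw :: "nat \<Rightarrow> nat \<Rightarrow> real" where
  "shw n s = fact s * fact (n - s) / fact (n + 1)"

lemma shw_total:
  assumes "finite N"
  shows "(\<Sum>S\<in>Pow N. shw (card N) (card S)) = 1"
proof -
  let ?n = "card N"
  have "(\<Sum>S\<in>Pow N. shw ?n (card S)) =
        (\<Sum>s\<in>{..?n}. \<Sum>S\<in>{S. S \<in> Pow N \<and> card S = s}. shw ?n (card S))"
    by (rule sum.group[symmetric]) (auto simp: assms card_mono)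
  also have "\<dots> = (\<Sum>s\<in>{..?n}. 1 / real (?n + 1))"
  proof (rule sum.cong[OF refl])
    fix s assume s: "s \<in> {..?n}"
    have "(\<Sum>S\<in>{S. S \<in> Pow N \<and> card S = s}. shw ?n (card S))
        = (\<Sum>S\<in>{S. S \<subseteq> N \<and> card S = s}. shw ?n s)" by (intro sum.cong) auto
    also have "\<dots> = real (?n choose s) * shw ?n s"
      using n_subsets[OF assms, of s] by simp
    also have "\<dots> = 1 / real (?n + 1)"
    proof -
      have "(fact ?n::real) + fact ?n * real ?n > 0" by (simp add: add_pos_nonneg)
      then show ?thesis
        using s by (simp add: shw_def binomial_fact fact_reduce[of "?n+1"] field_simps)
    qed
    finally show "(\<Sum>S\<in>{S. S \<in> Pow N \<and> card S = s}. shw ?n (card S)) = 1 / real (?n + 1)" .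
  qed
  also have "\<dots> = 1" by simp
  finally show ?thesis .
qed

lemma shw_half:
  assumes "finite N" "j \<in> N"
  shows "(\<Sum>S\<in>Pow N. if j \<in> S then shw (card N) (card S) else 0) = 1/2"
proof -
  let ?n = "card N"
  have eq: "(\<Sum>S\<in>{S\<in>Pow N. j \<in> S}. shw ?n (card S)) = (\<Sum>S\<in>{S\<in>Pow N. j \<notin> S}. shw ?n (card S))"
  proof (rule sum.reindex_bij_witness[where i = "\<lambda>S. N - S" and j = "\<lambda>S. N - S"])
    fix S assume S: "S \<in> {S\<in>Pow N. j \<in> S}"
    have "card (N - S) = ?n - card S" using S assms by (auto simp: card_Diff_subset finite_subset)
    moreover have "card S \<le> ?n" using S assms by (auto intro: card_mono)
    ultimately show "shw ?n (card (N - S)) = shw ?n (card S)"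
      by (simp add: shw_def)
  qed (use assms in auto)
  have tot: "(\<Sum>S\<in>{S\<in>Pow N. j \<in> S}. shw ?n (card S)) + (\<Sum>S\<in>{S\<in>Pow N. j \<notin> S}. shw ?n (card S)) = 1"
  proof -
    have "(\<Sum>S\<in>{S\<in>Pow N. j \<in> S} \<union> {S\<in>Pow N. j \<notin> S}. shw ?n (card S)) = (\<Sum>S\<in>{S\<in>Pow N. j \<in> S}. shw ?n (card S)) + (\<Sum>S\<in>{S\<in>Pow N. j \<notin> S}. shw ?n (card S))"
      by (rule sum.union_disjoint) (use assms(1) in auto)
    moreover have "{S\<in>Pow N. j \<in> S} \<union> {S\<in>Pow N. j \<notin> S} = Pow N" by auto
    ultimately show ?thesis using shw_total[OF assms(1)] by simp
  qed
  have "(\<Sum>S\<in>Pow N. if j \<in> S then shw ?n (card S) else 0) = (\<Sum>S\<in>{S\<in>Pow N. j \<in> S}. shw ?n (card S))"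
    using sum.inter_filter[of "Pow N" "\<lambda>S. shw ?n (card S)" "\<lambda>S. j\<in>S"] assms(1) by simp
  then show ?thesis using eq tot by simp
qed

lemma shapley_quad:
  fixes c :: "nat \<Rightarrow> real"
  assumes "finite N" "k \<notin> N"
  shows "(\<Sum>S\<in>Pow N. shw (card N) (card S) * ((\<Sum>j\<in>insert k S. c j)\<^sup>2 - (\<Sum>j\<in>S. c j)\<^sup>2))
       = c k * (\<Sum>j\<in>insert k N. c j)"
proof -
  let ?w = "\<lambda>S. shw (card N) (card S)"
  have "(\<Sum>S\<in>Pow N. ?w S * ((\<Sum>j\<in>insert k S. c j)\<^sup>2 - (\<Sum>j\<in>S. c j)\<^sup>2))
      = (\<Sum>S\<in>Pow N. ?w S * (c k)\<^sup>2 + 2 * c k * (\<Sum>j\<in>N. if j \<in> S then ?w S * c j else 0))"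
  proof (rule sum.cong[OF refl])
    fix S assume S: "S \<in> Pow N"
    have fS: "finite S" "k \<notin> S" using S assms finite_subset by auto
    have "(\<Sum>j\<in>N. if j \<in> S then ?w S * c j else 0) = ?w S * (\<Sum>j\<in>S. c j)"
      using S assms(1) by (simp add: sum.If_cases sum_distrib_left Int_absorb1 Int_commute)
    then show "?w S * ((\<Sum>j\<in>insert k S. c j)\<^sup>2 - (\<Sum>j\<in>S. c j)\<^sup>2) =
        ?w S * (c k)\<^sup>2 + 2 * c k * (\<Sum>j\<in>N. if j \<in> S then ?w S * c j else 0)"
      using fS by (simp add: power2_eq_square algebra_simps)
  qed
  also have "\<dots> = (c k)\<^sup>2 * (\<Sum>S\<in>Pow N. ?w S) + 2 * c k * (\<Sum>j\<in>N. c j * (\<Sum>S\<in>Pow N. if j \<in> S then ?w S else 0))"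
    by (simp add: sum.distrib sum_distrib_left sum_distrib_right sum.swap[of _ "Pow N" N] mult.commute mult.left_commute if_distrib cong: if_cong)
  also have "\<dots> = (c k)\<^sup>2 + c k * (\<Sum>j\<in>N. c j)"
  proof -
    have "(\<Sum>j\<in>N. c j * (\<Sum>S\<in>Pow N. if j \<in> S then ?w S else 0)) = (\<Sum>j\<in>N. c j * (1/2))"
      by (rule sum.cong) (simp_all add: shw_half[OF assms(1)])
    then show ?thesis using shw_total[OF assms(1)] by (simp add: sum_divide_distrib[symmetric])
  qed
  also have "\<dots> = c k * (\<Sum>j\<in>insert k N. c j)"
    using assms by (simp add: power2_eq_square algebra_simps)
  finally show ?thesis .
qed
theorem proposition3:
  fixes M :: "'w measure" and X :: "'w \<Rightarrow> nat \<Rightarrow> real \<Rightarrow> real"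
    and a b :: real and p :: nat
    and mu :: "nat \<Rightarrow> real \<Rightarrow> real" and K :: "nat \<Rightarrow> nat \<Rightarrow> real \<Rightarrow> real \<Rightarrow> real"
    and Mn :: nat and pe :: "nat \<Rightarrow> real" and psi :: "nat \<Rightarrow> nat \<Rightarrow> real \<Rightarrow> real"
  assumes "prob_space M"
    and "a < b" and "p \<ge> 1" and "Mn \<ge> 1"
    and rv: "\<And>j t. j \<in> {1..p} \<Longrightarrow> t \<in> {a..b} \<Longrightarrow> (\<lambda>w. X w j t) \<in> borel_measurable M"
    and L2: "\<And>j t. j \<in> {1..p} \<Longrightarrow> t \<in> {a..b} \<Longrightarrow> integrable M (\<lambda>w. (X w j t)\<^sup>2)"
    and L2cont: "\<And>j t. j \<in> {1..p} \<Longrightarrow> t \<in> {a..b} \<Longrightarrow>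
        ((\<lambda>s. prob_space.expectation M (\<lambda>w. (X w j s - X w j t)\<^sup>2)) \<longlongrightarrow> 0) (at t within {a..b})"
    and mean: "\<And>j t. j \<in> {1..p} \<Longrightarrow> t \<in> {a..b} \<Longrightarrow>
        mu j t = prob_space.expectation M (\<lambda>w. X w j t)"
    and cov: "\<And>j l s t. j \<in> {1..p} \<Longrightarrow> l \<in> {1..p} \<Longrightarrow> s \<in> {a..b} \<Longrightarrow> t \<in> {a..b} \<Longrightarrow>
        K j l s t = prob_space.expectation M (\<lambda>w. (X w j s - mu j s) * (X w l t - mu l t))"
    and eig: "top_eigenpairs {a..b} p K Mn pe psi"
    and pos: "pe Mn > 0"
    and k: "k \<in> {1..p}"
    and w: "w \<in> space M"
  shows "shapley_fMMD {a..b} p (X w) mu pe psi Mn k =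
    (\<Sum>i=1..Mn. (1 / pe i) * sinner {a..b} (\<lambda>t. X w k t - mu k t) (psi i k)
                 * Hinner {a..b} p (\<lambda>j t. X w j t - mu j t) (psi i))"
proof -
  let ?T = "{a..b}"
  let ?P = "{1..p}"
  let ?N = "?P - {k}"
  define c where "c i j = sinner ?T (\<lambda>t. X w j t - mu j t) (psi i j)" for i j
  have H: "Hinner ?T p (\<lambda>j t. Xhat S (X w) mu j t - mu j t) (psi i) = (\<Sum>j\<in>S. c i j)"
    if "S \<subseteq> ?P" for S i
  proof -
    have "Hinner ?T p (\<lambda>j t. Xhat S (X w) mu j t - mu j t) (psi i) = (\<Sum>j\<in>?P. if j \<in> S then c i j else 0)"
      unfolding Hinner_def
      by (rule sum.cong) (auto simp: Xhat_def c_def sinner_def)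
    also have "\<dots> = (\<Sum>j\<in>S. c i j)"
      using that by (simp add: sum.If_cases Int_absorb1)
    finally show ?thesis .
  qed
  have cardN: "card ?N = p - 1" using k by simp
  have fN: "finite ?N" "k \<notin> ?N" by auto
  have insN: "insert k ?N = ?P" using k by auto
  have "shapley_fMMD ?T p (X w) mu pe psi Mn k =
     (\<Sum>S\<in>Pow ?N. shw (card ?N) (card S) *
        (\<Sum>i=1..Mn. (1 / pe i) * ((\<Sum>j\<in>insert k S. c i j)\<^sup>2 - (\<Sum>j\<in>S. c i j)\<^sup>2)))"
    unfolding shapley_fMMD_def
  proof (rule sum.cong[OF refl])
    fix S assume S: "S \<in> Pow ?N"
    then have S1: "S \<subseteq> ?P" "insert k S \<subseteq> ?P" using k by auto
    have cs: "card S \<le> p - 1" using S cardN card_mono[OF fN(1)] by auto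
    have w: "fact (card S) * fact (p - card S - 1) / fact p = shw (card ?N) (card S)"
      unfolding shw_def cardN using \<open>p \<ge> 1\<close> cs by (simp add: diff_commute)
    show "fact (card S) * fact (p - card S - 1) / fact p *
        (fMMD2 ?T p (Xhat (insert k S) (X w) mu) mu pe psi Mn - fMMD2 ?T p (Xhat S (X w) mu) mu pe psi Mn) =
        shw (card ?N) (card S) * (\<Sum>i=1..Mn. (1 / pe i) * ((\<Sum>j\<in>insert k S. c i j)\<^sup>2 - (\<Sum>j\<in>S. c i j)\<^sup>2))"
      unfolding w fMMD2_def H[OF S1(1)] H[OF S1(2)]
      by (simp add: sum_subtractf right_diff_distrib)
  qed
  also have "\<dots> = (\<Sum>i=1..Mn. (1 / pe i) * (\<Sum>S\<in>Pow ?N. shw (card ?N) (card S) *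
        ((\<Sum>j\<in>insert k S. c i j)\<^sup>2 - (\<Sum>j\<in>S. c i j)\<^sup>2)))"
    by (simp add: sum_distrib_left mult.left_commute) (rule sum.swap)
  also have "\<dots> = (\<Sum>i=1..Mn. (1 / pe i) * (c i k * (\<Sum>j\<in>?P. c i j)))"
    using shapley_quad[OF fN] insN by simp
  also have "\<dots> = (\<Sum>i=1..Mn. (1 / pe i) * sinner {a..b} (\<lambda>t. X w k t - mu k t) (psi i k)
                 * Hinner {a..b} p (\<lambda>j t. X w j t - mu j t) (psi i))"
    by (simp add: c_def Hinner_def)
  finally show ?thesis .
qed

end
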